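(* Let $n\ge3$, $2\le t\le\lceil n/2\rceil$, and let $\mathsf{X}=\mathsf{C}_n(t;i,j)$ with $1\le i<j\le t$ and $j\ne i+1$. Then \[F_2(\mathsf{X})=\begin{cases}(t-1)(n-t+1) & \text{if } i=1 \text{ and } j=t,\\ (n-t+1)\big[(t-j+i)(j-i+1)-1\big] & \text{otherwise.}\end{cases}\]
   Context: $\mathsf{C}_n(t;i,j)$ ($i<j$) denotes the $n$-cycle with vertices $v_1,\dots,v_n$ in cyclic order (edges $v_kv_{k+1}$ and $v_nv_1$), with marked (ramified) vertices $v_1$ and $v_t$, together with one additional edge between $v_i$ and $v_j$. $F_2$ is the number of spanning forests consisting of two trees, one containing $v_1$ and the other containing $v_t$. *)

theory Defs
  imports Main
begin

text \<open>Undirected graphs on vertex set {1..n}; an edge is a 2-element set of vertices.\<close>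

text \<open>C_n(t;i,j): the n-cycle v_1,...,v_n (v_k = k) plus the extra edge {v_i, v_j}.
  (The marked vertices v_1, v_t enter only through F_2 below.)\<close>
definition cycle_chord_edges :: "nat \<Rightarrow> nat \<Rightarrow> nat \<Rightarrow> nat set set" where
  "cycle_chord_edges n i j =
     {{k, Suc k} | k. 1 \<le> k \<and> k < n} \<union> {{n, 1}} \<union> {{i, j}}"

definition conn :: "nat set set \<Rightarrow> nat \<Rightarrow> nat \<Rightarrow> bool" where
  "conn F u v = (\<lambda>x y. {x, y} \<in> F)\<^sup>*\<^sup>* u v"

definition acyclic_edges :: "nat set set \<Rightarrow> bool" where
  "acyclic_edges F = (\<forall>e\<in>F. \<forall>x y. e = {x, y} \<longrightarrow> \<not> conn (F - {e}) x y)"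

definition two_tree_forest :: "nat \<Rightarrow> nat set set \<Rightarrow> nat \<Rightarrow> nat \<Rightarrow> nat set set \<Rightarrow> bool" where
  "two_tree_forest n E a b F =
     (F \<subseteq> E \<and> acyclic_edges F \<and>
      (\<forall>v\<in>{1..n}. conn F a v \<or> conn F b v) \<and> \<not> conn F a b)"

definition F2 :: "nat \<Rightarrow> nat set set \<Rightarrow> nat \<Rightarrow> nat \<Rightarrow> nat" where
  "F2 n E a b = card {F. two_tree_forest n E a b F}"

end

theory Submission
  imports Defs
begin


lemma conn_refl[simp]: "conn F u u" by (simp add: conn_def)

lemma conn_edge: "{u,v} \<in> F \<Longrightarrow> conn F u v"
  by (simp add: conn_def r_into_rtranclp)

lemma conn_trans: "conn F u v \<Longrightarrow> conn F v w \<Longrightarrow> conn F u w"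
  unfolding conn_def by (rule rtranclp_trans)

lemma conn_sym: "conn F u v \<Longrightarrow> conn F v u"
  unfolding conn_def
proof (induction rule: rtranclp_induct)
  case base then show ?case by simp
next
  case (step y z)
  have "{z,y} \<in> F" using step(2) by (simp add: insert_commute)
  then show ?case using step(3) by (meson converse_rtranclp_into_rtranclp)
qed

lemma conn_mono: "conn F u v \<Longrightarrow> F \<subseteq> G \<Longrightarrow> conn G u v"
  unfolding conn_def by (induction rule: rtranclp_induct) (auto intro: rtranclp.rtrancl_into_rtrancl)

lemma conn_closed:
  assumes "conn F u v" "u \<in> S" "\<forall>a b. {a,b} \<in> F \<longrightarrow> a \<in> S \<longrightarrow> b \<in> S"
  shows "v \<in> S"
  using assms unfolding conn_def by (induction rule: rtranclp_induct) auto

lemma conn_path: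
  assumes "\<forall>k. a \<le> k \<longrightarrow> k < b \<longrightarrow> {k, Suc k} \<in> F" "a \<le> b"
  shows "conn F a b"
  using assms
proof (induction b)
  case 0 then show ?case by simp
next
  case (Suc b)
  show ?case
  proof (cases "a = Suc b")
    case True then show ?thesis by simp
  next
    case False
    then have "conn F a b" using Suc by auto
    moreover have "conn F b (Suc b)" using Suc False by (auto intro: conn_edge)
    ultimately show ?thesis by (rule conn_trans)
  qed
qed

lemma acyclic_mono: "acyclic_edges F \<Longrightarrow> G \<subseteq> F \<Longrightarrow> acyclic_edges G"
  unfolding acyclic_edges_def
  by (meson Diff_mono conn_mono in_mono order_refl)

lemma conn_insert:
  assumes "conn (insert {x,y} G) u v"
  shows "conn G u v \<or> (conn G u x \<and> conn G y v) \<or> (conn G u y \<and> conn G x v)"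
  using assms unfolding conn_def[of "insert {x,y} G"]
proof (induction rule: rtranclp_induct)
  case base then show ?case by simp
next
  case (step w z)
  show ?case
  proof (cases "{w,z} \<in> G")
    case True
    then have "conn G w z" by (rule conn_edge)
    with step(3) show ?thesis by (meson conn_trans)
  next
    case False
    then have "{w,z} = {x,y}" using step(2) by auto
    then have "(w = x \<and> z = y) \<or> (w = y \<and> z = x)" by (auto simp: doubleton_eq_iff)
    with step(3) show ?thesis by auto
  qed
qed

lemma acyclic_insert:
  assumes "acyclic_edges F" "\<not> conn F x y"
  shows "acyclic_edges (insert {x,y} F)"
  unfolding acyclic_edges_def
proof (intro ballI allI impI notI)
  fix f u v
  assume f: "f \<in> insert {x,y} F" "f = {u,v}" and c: "conn (insert {x,y} F - {f}) u v"
  show False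
  proof (cases "f = {x,y}")
    case True
    then have "conn F u v" using c by (rule_tac conn_mono) auto
    moreover have "(u = x \<and> v = y) \<or> (u = y \<and> v = x)" using True f by (auto simp: doubleton_eq_iff)
    ultimately show False using assms(2) conn_sym by blast
  next
    case False
    then have fF: "f \<in> F" using f by auto
    have "insert {x,y} F - {f} = insert {x,y} (F - {f})" using False by auto
    then have c2: "conn (F - {f}) u v \<or> (conn (F - {f}) u x \<and> conn (F - {f}) y v) \<or> (conn (F - {f}) u y \<and> conn (F - {f}) x v)"
      using c conn_insert by metis
    have nc: "\<not> conn (F - {f}) u v" using assms(1) fF f unfolding acyclic_edges_def by blast
    have m: "conn (F - {f}) a b \<Longrightarrow> conn F a b" for a b by (erule conn_mono) auto
    have uv: "conn F u v" "conn F v u" using fF f by (auto intro: conn_edge conn_sym)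
    have "conn F x y"
    proof -
      { assume a: "conn (F - {f}) u x" "conn (F - {f}) y v"
        have "conn F x u" using m[OF a(1)] by (rule conn_sym)
        moreover have "conn F v y" using m[OF a(2)] by (rule conn_sym)
        ultimately have "conn F x y" using uv conn_trans by metis }
      moreover
      { assume a: "conn (F - {f}) u y" "conn (F - {f}) x v"
        have "conn F y v" using conn_trans[OF conn_sym[OF m[OF a(1)]] uv(1)] .
        then have "conn F x y" using m[OF a(2)] conn_trans conn_sym by metis }
      ultimately show ?thesis using c2 nc by blast
    qed
    then show False using assms(2) by simp
  qed
qed

definition ed :: "nat \<Rightarrow> nat set" where "ed k = {k, Suc k}"

lemma ed_eq_iff: "{a,b} = ed k \<longleftrightarrow> (a = k \<and> b = Suc k) \<or> (a = Suc k \<and> b = k)"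
  unfolding ed_def by (rule doubleton_eq_iff)

lemma ed_mem_iff: "{a,b} \<in> ed ` K \<longleftrightarrow> (\<exists>k\<in>K. (a = k \<and> b = Suc k) \<or> (a = Suc k \<and> b = k))"
  unfolding image_iff ed_eq_iff[symmetric] by (auto simp del: ed_eq_iff)

lemma ed_inj: "ed a = ed b \<longleftrightarrow> a = b"
proof
  assume h: "ed a = ed b"
  have "a \<in> ed a" "b \<in> ed b" by (simp_all add: ed_def)
  then have "a \<in> ed b" "b \<in> ed a" using h by simp_all
  then show "a = b" by (auto simp: ed_def)
qed simp

lemma path_acyclic: "acyclic_edges (ed ` {1..<m})"
proof (induction m)
  case 0 then show ?case by (simp add: acyclic_edges_def)
next
  case (Suc m)
  show ?case
  proof (cases "m = 0")
    case True then show ?thesis by (simp add: acyclic_edges_def)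
  next
    case False
    then have eq: "ed ` {1..<Suc m} = insert {m, Suc m} (ed ` {1..<m})"
      by (simp add: ed_def atLeastLessThanSuc)
    have "\<not> conn (ed ` {1..<m}) m (Suc m)"
    proof
      assume "conn (ed ` {1..<m}) m (Suc m)"
      moreover have "\<forall>a b. {a,b} \<in> ed ` {1..<m} \<longrightarrow> a \<in> {..m} \<longrightarrow> b \<in> {..m}"
        unfolding ed_mem_iff by auto
      ultimately have "Suc m \<in> {..m}"
        using conn_closed by blast
      then show False by simp
    qed
    with Suc.IH have "acyclic_edges (insert {m, Suc m} (ed ` {1..<m}))"
      by (rule acyclic_insert)
    then show ?thesis unfolding eq .
  qed
qed


lemma conn_interval:
  assumes "\<forall>k. lo \<le> k \<longrightarrow> k < hi \<longrightarrow> ed k \<in> F" "lo \<le> x" "x \<le> hi" "lo \<le> y" "y \<le> hi"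
  shows "conn F x y"
proof (cases "x \<le> y")
  case True
  then show ?thesis using assms by (intro conn_path) (auto simp: ed_def)
next
  case False
  then have "conn F y x" using assms by (intro conn_path) (auto simp: ed_def)
  then show ?thesis by (rule conn_sym)
qed

locale cc =
  fixes n t i j :: nat
  assumes n3: "3 \<le> n" and t2: "2 \<le> t" and tn: "t \<le> (n + 1) div 2"
    and i1: "1 \<le> i" and ij: "i < j" and jt: "j \<le> t" and ji: "j \<noteq> i + 1"
begin

lemma tn': "t < n" using n3 tn by presburger

lemma ij2: "i + 2 \<le> j" using ij ji by linarith

definition "c = {i, j}"

lemma c_not_ed: "c \<noteq> ed k"
  unfolding c_def ed_eq_iff using ij ji by auto

lemma n1_not_ed: "{n, 1} \<noteq> ed k"
  unfolding ed_eq_iff using n3 by auto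

lemma c_ne_n1: "c \<noteq> {n, 1}"
  unfolding c_def doubleton_eq_iff using ij jt tn' by auto

definition "E = insert c (insert {n, 1} (ed ` {1..<n}))"

lemma E_eq: "cycle_chord_edges n i j = E"
  unfolding cycle_chord_edges_def E_def c_def ed_def by auto

lemma finite_E: "finite E" unfolding E_def by simp

definition "pe p = (if p = n then {n, 1} else ed p)"

lemma closed_gen:
  assumes "F \<subseteq> E"
    and "\<forall>k. 1 \<le> k \<longrightarrow> k < n \<longrightarrow> ed k \<in> F \<longrightarrow> (k \<in> S \<longleftrightarrow> Suc k \<in> S)"
    and "{n, 1} \<in> F \<longrightarrow> (n \<in> S \<longleftrightarrow> 1 \<in> S)"
    and "c \<in> F \<longrightarrow> (i \<in> S \<longleftrightarrow> j \<in> S)"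
  shows "\<forall>u v. {u, v} \<in> F \<longrightarrow> u \<in> S \<longrightarrow> v \<in> S"
proof (intro allI impI)
  fix u v assume uv: "{u, v} \<in> F" and u: "u \<in> S"
  then have "{u, v} \<in> E" using assms(1) by auto
  then consider "{u, v} = c" | "{u, v} = {n, 1}" | k where "1 \<le> k" "k < n" "{u, v} = ed k"
    unfolding E_def by auto
  then show "v \<in> S"
  proof cases
    case 1
    then have "(u = i \<and> v = j) \<or> (u = j \<and> v = i)" unfolding c_def doubleton_eq_iff .
    then show ?thesis using assms(4) uv u 1 by auto
  next
    case 2
    then have "(u = n \<and> v = 1) \<or> (u = 1 \<and> v = n)" unfolding doubleton_eq_iff .
    then show ?thesis using assms(3) uv u 2 by auto
  next
    case 3
    then have "(u = k \<and> v = Suc k) \<or> (u = Suc k \<and> v = k)" by (simp only: ed_eq_iff)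
    then show ?thesis using assms(2) uv u 3 by auto
  qed
qed

lemma isolated:
  assumes "\<forall>u v. {u, v} \<in> F \<longrightarrow> u \<in> S \<longrightarrow> v \<in> S" "v \<in> S" "1 \<notin> S" "t \<notin> S"
    "conn F 1 v \<or> conn F t v"
  shows False
  using assms conn_sym conn_closed by metis

lemma seg_false:
  assumes "F \<subseteq> E" "\<forall>v\<in>{1..n}. conn F 1 v \<or> conn F t v"
    "1 \<le> a" "a < b" "b < t" "ed a \<notin> F" "ed b \<notin> F"
    "c \<in> F \<longrightarrow> (i \<in> {a<..b} \<longleftrightarrow> j \<in> {a<..b})"
  shows False
proof -
  have cl: "\<forall>u v. {u, v} \<in> F \<longrightarrow> u \<in> {a<..b} \<longrightarrow> v \<in> {a<..b}"
  proof (rule closed_gen[OF assms(1)])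
    show "\<forall>k. 1 \<le> k \<longrightarrow> k < n \<longrightarrow> ed k \<in> F \<longrightarrow> (k \<in> {a<..b} \<longleftrightarrow> Suc k \<in> {a<..b})"
    proof (intro allI impI)
      fix k assume "ed k \<in> F"
      then have "k \<noteq> a" "k \<noteq> b" using assms(6,7) by auto
      then show "(k \<in> {a<..b} \<longleftrightarrow> Suc k \<in> {a<..b})" by auto
    qed
    show "{n, 1} \<in> F \<longrightarrow> (n \<in> {a<..b} \<longleftrightarrow> 1 \<in> {a<..b})" using assms(3-5) tn' by auto
    show "c \<in> F \<longrightarrow> (i \<in> {a<..b} \<longleftrightarrow> j \<in> {a<..b})" by (rule assms(8))
  qed
  show False
    by (rule isolated[OF cl, of b]) (use assms tn' in auto)
qed

lemma p2_false:
  assumes "F \<subseteq> E" "\<forall>v\<in>{1..n}. conn F 1 v \<or> conn F t v"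
    "t \<le> p" "p < q" "q \<le> n" "pe p \<notin> F" "pe q \<notin> F"
  shows False
proof -
  have cl: "\<forall>u v. {u, v} \<in> F \<longrightarrow> u \<in> {p<..q} \<longrightarrow> v \<in> {p<..q}"
  proof (rule closed_gen[OF assms(1)])
    show "\<forall>k. 1 \<le> k \<longrightarrow> k < n \<longrightarrow> ed k \<in> F \<longrightarrow> (k \<in> {p<..q} \<longleftrightarrow> Suc k \<in> {p<..q})"
    proof (intro allI impI)
      fix k assume k: "k < n" "ed k \<in> F"
      then have "k \<noteq> p" using assms(4-6) by (auto simp: pe_def)
      moreover have "k \<noteq> q" using assms(7) k by (auto simp: pe_def)
      ultimately show "(k \<in> {p<..q} \<longleftrightarrow> Suc k \<in> {p<..q})" by auto
    qed
    show "{n, 1} \<in> F \<longrightarrow> (n \<in> {p<..q} \<longleftrightarrow> 1 \<in> {p<..q})" using assms(3-7) t2 by (auto simp: pe_def)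
    show "c \<in> F \<longrightarrow> (i \<in> {p<..q} \<longleftrightarrow> j \<in> {p<..q})" using assms(3) ij jt by auto
  qed
  show False
    by (rule isolated[OF cl, of q]) (use assms t2 in auto)
qed

lemma sep:
  assumes "F \<subseteq> E" "t \<le> p" "p \<le> n" "pe p \<notin> F" "1 \<le> a" "a < t" "ed a \<notin> F"
    "c \<in> F \<longrightarrow> \<not> (i \<le> a \<and> a < j)"
  shows "\<not> conn F 1 t"
proof
  assume h: "conn F 1 t"
  have cl: "\<forall>u v. {u, v} \<in> F \<longrightarrow> u \<in> {a<..p} \<longrightarrow> v \<in> {a<..p}"
  proof (rule closed_gen[OF assms(1)])
    show "\<forall>k. 1 \<le> k \<longrightarrow> k < n \<longrightarrow> ed k \<in> F \<longrightarrow> (k \<in> {a<..p} \<longleftrightarrow> Suc k \<in> {a<..p})"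
    proof (intro allI impI)
      fix k assume k: "k < n" "ed k \<in> F"
      then have "k \<noteq> p" using assms(4) by (auto simp: pe_def)
      moreover have "k \<noteq> a" using assms(7) k by auto
      ultimately show "(k \<in> {a<..p} \<longleftrightarrow> Suc k \<in> {a<..p})" by auto
    qed
    show "{n, 1} \<in> F \<longrightarrow> (n \<in> {a<..p} \<longleftrightarrow> 1 \<in> {a<..p})" using assms(2-6) by (auto simp: pe_def)
    show "c \<in> F \<longrightarrow> (i \<in> {a<..p} \<longleftrightarrow> j \<in> {a<..p})" using assms(2,8) ij jt by auto
  qed
  have "1 \<in> {a<..p}" using conn_closed[OF conn_sym[OF h] _ cl] assms(2,6) by auto
  then show False using assms(5) by simp
qed

lemma T1:
  assumes "1 \<le> p" "p \<le> n"
  shows "acyclic_edges (insert {n, 1} (ed ` {1..<n}) - {pe p})"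
proof (cases "p = n")
  case True
  then have "insert {n, 1} (ed ` {1..<n}) - {pe p} = ed ` {1..<n}"
    using n1_not_ed by (auto simp: pe_def)
  then show ?thesis using path_acyclic by simp
next
  case False
  then have eq: "insert {n, 1} (ed ` {1..<n}) - {pe p} = insert {n, 1} (ed ` {1..<n} - {ed p})"
    using n1_not_ed by (auto simp: pe_def)
  have "\<not> conn (ed ` {1..<n} - {ed p}) n 1"
  proof
    assume c1: "conn (ed ` {1..<n} - {ed p}) n 1"
    have c2: "\<forall>a b. {a, b} \<in> ed ` {1..<n} - {ed p} \<longrightarrow> a \<in> {p<..} \<longrightarrow> b \<in> {p<..}"
    proof (intro allI impI)
      fix a b assume ab: "{a, b} \<in> ed ` {1..<n} - {ed p}" "a \<in> {p<..}"
      then obtain k where k: "{a, b} = ed k" "ed k \<noteq> ed p" by auto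
      then have "(a = k \<and> b = Suc k) \<or> (a = Suc k \<and> b = k)" "k \<noteq> p"
        by (simp_all only: ed_eq_iff) auto
      then show "b \<in> {p<..}" using ab(2) by auto
    qed
    have "1 \<in> {p<..}" by (rule conn_closed[OF c1 _ c2]) (use assms False in auto)
    then show False using assms by auto
  qed
  moreover have "acyclic_edges (ed ` {1..<n} - {ed p})"
    using path_acyclic acyclic_mono by blast
  ultimately show ?thesis unfolding eq using acyclic_insert by blast
qed

lemma T2:
  assumes "t \<le> p" "p \<le> n" "i \<le> b" "b < j"
  shows "acyclic_edges (E - {pe p, ed b})"
proof -
  let ?G = "insert {n, 1} (ed ` {1..<n}) - {pe p} - {ed b}"
  have cpe: "c \<noteq> pe p" using c_not_ed c_ne_n1 by (auto simp: pe_def)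
  have cE: "c \<notin> insert {n, 1} (ed ` {1..<n})" using c_not_ed c_ne_n1 by auto
  have eq0: "E - {pe p, ed b} = insert c ?G"
    using cpe c_not_ed[of b] unfolding E_def by blast
  have eq: "E - {pe p, ed b} = insert {i, j} ?G" using eq0 unfolding c_def .
  have GE: "?G \<subseteq> E" unfolding E_def by auto
  have cG: "c \<notin> ?G" using cE by auto
  have "\<not> conn ?G i j"
  proof
    assume h: "conn ?G i j"
    have cl: "\<forall>u v. {u, v} \<in> ?G \<longrightarrow> u \<in> {b<..p} \<longrightarrow> v \<in> {b<..p}"
    proof (rule closed_gen[OF GE])
      show "\<forall>k. 1 \<le> k \<longrightarrow> k < n \<longrightarrow> ed k \<in> ?G \<longrightarrow> (k \<in> {b<..p} \<longleftrightarrow> Suc k \<in> {b<..p})"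
      proof (intro allI impI)
        fix k assume k: "k < n" "ed k \<in> ?G"
        have "k \<noteq> p"
        proof
          assume "k = p"
          then have "pe p = ed k" using k(1) by (simp add: pe_def)
          with k(2) show False by simp
        qed
        moreover have "k \<noteq> b"
        proof
          assume "k = b"
          with k(2) show False by simp
        qed
        ultimately show "(k \<in> {b<..p} \<longleftrightarrow> Suc k \<in> {b<..p})" by (simp; presburger)
      qed
      show "{n, 1} \<in> ?G \<longrightarrow> (n \<in> {b<..p} \<longleftrightarrow> 1 \<in> {b<..p})"
      proof
        assume "{n, 1} \<in> ?G"
        then have "p \<noteq> n" by (auto simp: pe_def)
        then show "(n \<in> {b<..p} \<longleftrightarrow> 1 \<in> {b<..p})" using assms i1 by auto
      qed
      show "c \<in> ?G \<longrightarrow> (i \<in> {b<..p} \<longleftrightarrow> j \<in> {b<..p})" using cG by blast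
    qed
    have "i \<in> {b<..p}" using conn_closed[OF conn_sym[OF h] _ cl] assms jt by auto
    then show False using assms by simp
  qed
  moreover have "acyclic_edges ?G"
  proof (rule acyclic_mono[OF T1[of p]])
    show "1 \<le> p" using assms t2 by simp
    show "p \<le> n" using assms by simp
  qed auto
  ultimately show ?thesis unfolding eq using acyclic_insert by blast
qed

end


context cc begin

definition "ArcC = insert c (ed ` {1..<t})"
definition "AD = ed ` ({1..<i} \<union> {j..<t})"
definition "Bs = ed ` {i..<j}"
definition "V2 = {Q. Q \<subseteq> ArcC \<and> card Q = 2 \<and> \<not> Q \<subseteq> AD \<and> \<not> Q \<subseteq> Bs}"
definition "Good = (\<lambda>(p, Q). E - insert (pe p) Q) ` ({t..n} \<times> V2)"

lemma inj_ed: "inj ed" by (simp add: inj_def ed_inj)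

lemma ed_in_ed_img: "ed k \<in> ed ` K \<longleftrightarrow> k \<in> K"
  by (rule inj_image_mem_iff[OF inj_ed])

lemma pe_E: assumes "t \<le> p" "p \<le> n" shows "pe p \<in> E"
proof (cases "p = n")
  case True then show ?thesis by (simp add: pe_def E_def)
next
  case False
  then have "p \<in> {1..<n}" using assms t2 by simp
  then have "ed p \<in> ed ` {1..<n}" by (rule imageI)
  then show ?thesis using False by (simp add: pe_def E_def)
qed

lemma pe_notArc: assumes "t \<le> p" "p \<le> n" shows "pe p \<notin> ArcC"
proof (cases "p = n")
  case True
  then show ?thesis using c_ne_n1 n1_not_ed unfolding ArcC_def pe_def by auto
next
  case False
  then have "pe p = ed p" by (simp add: pe_def)
  moreover have "ed p \<noteq> c" using c_not_ed by metis
  moreover have "ed p \<notin> ed ` {1..<t}" unfolding ed_in_ed_img using assms by simp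
  ultimately show ?thesis unfolding ArcC_def by simp
qed

lemma ArcC_E: "ArcC \<subseteq> E"
  unfolding ArcC_def E_def using tn' by auto

lemma E_split: assumes "x \<in> E" shows "x \<in> ArcC \<or> (\<exists>q\<in>{t..n}. x = pe q)"
proof -
  consider "x = c" | "x = {n, 1}" | k where "1 \<le> k" "k < n" "x = ed k"
    using assms unfolding E_def by auto
  then show ?thesis
  proof cases
    case 1 then show ?thesis unfolding ArcC_def by simp
  next
    case 2 then have "x = pe n" by (simp add: pe_def)
    then show ?thesis using tn' by auto
  next
    case 3
    show ?thesis
    proof (cases "k < t")
      case True then show ?thesis using 3 unfolding ArcC_def by auto
    next
      case False
      then have "x = pe k" using 3 by (simp add: pe_def)
      then show ?thesis using False 3 by auto
    qed
  qed
qed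

lemma pe_inj: assumes "t \<le> p" "p \<le> n" "t \<le> q" "q \<le> n" "pe p = pe q" shows "p = q"
proof (rule ccontr)
  assume ne: "p \<noteq> q"
  show False
  proof (cases "p = n")
    case True
    then have "q \<noteq> n" using ne by simp
    then show ?thesis using assms True n1_not_ed[of q] by (simp add: pe_def)
  next
    case False
    show ?thesis
    proof (cases "q = n")
      case True
      then show ?thesis using assms False n1_not_ed[of p] by (simp add: pe_def)
    next
      case False2: False
      then show ?thesis using assms False ne ed_inj by (simp add: pe_def)
    qed
  qed
qed

lemma ordered_cond:
  assumes "a < b" "\<not> {ed a, ed b} \<subseteq> AD" "\<not> {ed a, ed b} \<subseteq> Bs" "1 \<le> a" "b < t"
  shows "(a < i \<and> i \<le> b \<and> b < j) \<or> (i \<le> a \<and> a < j \<and> j \<le> b)"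
proof -
  have "\<not> (a \<in> {1..<i} \<union> {j..<t} \<and> b \<in> {1..<i} \<union> {j..<t})"
    using assms(2) unfolding AD_def by (simp add: ed_in_ed_img del: Un_iff)
  moreover have "\<not> (a \<in> {i..<j} \<and> b \<in> {i..<j})"
    using assms(3) unfolding Bs_def by (simp add: ed_in_ed_img)
  ultimately show ?thesis using assms by auto
qed

lemma V2_cases:
  assumes "Q \<in> V2"
  obtains b where "1 \<le> b" "b < t" "Q = {c, ed b}"
    | a b where "1 \<le> a" "a < b" "b < t" "Q = {ed a, ed b}"
        "(a < i \<and> i \<le> b \<and> b < j) \<or> (i \<le> a \<and> a < j \<and> j \<le> b)"
proof -
  from assms have Q: "Q \<subseteq> ArcC" "card Q = 2" "\<not> Q \<subseteq> AD" "\<not> Q \<subseteq> Bs" unfolding V2_def by auto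
  from Q(2) obtain x y where xy: "x \<noteq> y" "Q = {x, y}" by (auto simp: card_2_iff)
  have x: "x = c \<or> (\<exists>k. 1 \<le> k \<and> k < t \<and> x = ed k)" using Q(1) xy unfolding ArcC_def by auto
  have y: "y = c \<or> (\<exists>k. 1 \<le> k \<and> k < t \<and> y = ed k)" using Q(1) xy unfolding ArcC_def by auto
  show ?thesis
  proof (cases "x = c")
    case True
    then obtain k where "1 \<le> k" "k < t" "y = ed k" using y xy by auto
    then show ?thesis using that(1) xy True by blast
  next
    case xc: False
    then obtain a' where a': "1 \<le> a'" "a' < t" "x = ed a'" using x by auto
    show ?thesis
    proof (cases "y = c")
      case True
      then show ?thesis using that(1)[of a'] xy a' by (simp add: insert_commute)
    next
      case False
      then obtain b' where b': "1 \<le> b'" "b' < t" "y = ed b'" using y by auto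
      have "a' \<noteq> b'" using xy a' b' by auto
      then consider "a' < b'" | "b' < a'" by linarith
      then show ?thesis
      proof cases
        case 1
        then show ?thesis using that(2)[of a' b'] ordered_cond[of a' b'] Q a' b' xy by auto
      next
        case 2
        have Qe: "Q = {ed b', ed a'}" using xy a' b' by (simp add: insert_commute)
        then show ?thesis using that(2)[of b' a'] ordered_cond[of b' a'] Q a' b' 2 by auto
      qed
    qed
  qed
qed


lemma ed_in_F:
  assumes "1 \<le> k" "k < n" "ed k \<noteq> pe p" "ed k \<notin> Q"
  shows "ed k \<in> E - insert (pe p) Q"
proof -
  have "ed k \<in> ed ` {1..<n}" using assms by simp
  then show ?thesis using assms unfolding E_def by simp
qed

lemma arcF:
  assumes "t \<le> p" "p \<le> n" "1 \<le> k" "k < t" "ed k \<notin> Q"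
  shows "ed k \<in> E - insert (pe p) Q"
proof (rule ed_in_F)
  show "1 \<le> k" "k < n" "ed k \<notin> Q" using assms tn' by auto
  have "ed k \<in> ArcC" unfolding ArcC_def using assms by simp
  then show "ed k \<noteq> pe p" using pe_notArc[OF assms(1,2)] by metis
qed

lemma p2_span:
  assumes "t \<le> p" "p \<le> n" "Q \<subseteq> ArcC" "t \<le> v" "v \<le> n"
  shows "conn (E - insert (pe p) Q) 1 v \<or> conn (E - insert (pe p) Q) t v"
proof -
  let ?F = "E - insert (pe p) Q"
  have edF: "ed k \<in> ?F" if "t \<le> k" "k < n" "k \<noteq> p" for k
  proof (rule ed_in_F)
    show "1 \<le> k" "k < n" using that t2 by auto
    show "ed k \<noteq> pe p"
    proof (cases "p = n")
      case True then show ?thesis using n1_not_ed[of k] by (simp add: pe_def)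
    next
      case False then show ?thesis using that ed_inj by (simp add: pe_def)
    qed
    have "ed k \<notin> ArcC" unfolding ArcC_def using that c_not_ed[of k] by (simp add: ed_in_ed_img)
    then show "ed k \<notin> Q" using assms(3) by blast
  qed
  show ?thesis
  proof (cases "v \<le> p")
    case True
    have "conn ?F t v"
      by (rule conn_interval[of t v]) (use True edF assms in auto)
    then show ?thesis by simp
  next
    case False
    then have pn: "p < n" "p \<noteq> n" using assms by auto
    have "conn ?F v n"
      by (rule conn_interval[of "Suc p" n]) (use False edF assms in auto)
    moreover have "{n, 1} \<in> ?F"
    proof -
      have "{n, 1} = pe n" by (simp add: pe_def)
      then have "{n, 1} \<notin> ArcC" using pe_notArc[of n] tn' by simp
      then have "{n, 1} \<notin> Q" using assms(3) by blast
      moreover have "{n, 1} \<noteq> pe p" using pn n1_not_ed[of p] by (simp add: pe_def)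
      ultimately show ?thesis unfolding E_def by simp
    qed
    then have "conn ?F n 1" by (rule conn_edge)
    ultimately have "conn ?F v 1" by (rule conn_trans)
    then show ?thesis using conn_sym by blast
  qed
qed


lemma bwd:
  assumes p: "t \<le> p" "p \<le> n" and QV: "Q \<in> V2"
  shows "two_tree_forest n E 1 t (E - insert (pe p) Q)"
proof -
  let ?F = "E - insert (pe p) Q"
  have QA: "Q \<subseteq> ArcC" using QV unfolding V2_def by simp
  have sub: "?F \<subseteq> E" by blast
  have peF: "pe p \<notin> ?F" by blast
  have p1: "1 \<le> p" using p t2 by simp
  have all: "acyclic_edges ?F \<and> \<not> conn ?F 1 t \<and> (\<forall>v\<in>{1..n}. conn ?F 1 v \<or> conn ?F t v)"
    using QV
    proof (cases rule: V2_cases)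
      case (1 b)
      have edq: "ed k \<in> ?F" if "1 \<le> k" "k < t" "k \<noteq> b" for k
        using arcF[OF p that(1,2)] that(3) 1 c_not_ed[of k] ed_inj by auto
      have a: "acyclic_edges ?F"
      proof (rule acyclic_mono[OF T1[OF p1 p(2)]])
        show "?F \<subseteq> insert {n, 1} (ed ` {1..<n}) - {pe p}" using 1 unfolding E_def by auto
      qed
      have s: "\<not> conn ?F 1 t"
        by (rule sep[OF sub p peF, of b]) (use 1 in auto)
      have sp: "\<forall>v\<in>{1..n}. conn ?F 1 v \<or> conn ?F t v"
      proof
        fix v assume v: "v \<in> {1..n}"
        show "conn ?F 1 v \<or> conn ?F t v"
        proof (cases "t \<le> v")
          case True then show ?thesis using p2_span[OF p QA True] v by simp
        next
          case False
          show ?thesis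
          proof (cases "v \<le> b")
            case True
            have "conn ?F 1 v"
              by (rule conn_interval[of 1 b]) (use True v 1 edq in auto)
            then show ?thesis by simp
          next
            case False2: False
            have "conn ?F t v"
              by (rule conn_interval[of "Suc b" t]) (use False False2 v 1 edq in auto)
            then show ?thesis by simp
          qed
        qed
      qed
      show ?thesis using a s sp by blast
    next
      case (2 a b)
      have edq: "ed k \<in> ?F" if "1 \<le> k" "k < t" "k \<noteq> a" "k \<noteq> b" for k
        using arcF[OF p that(1,2)] that(3,4) 2 ed_inj by auto
      have cF: "c \<in> ?F"
      proof -
        have "c \<noteq> pe p" using pe_notArc[OF p] unfolding ArcC_def by auto
        moreover have "c \<notin> Q" using 2 c_not_ed by auto
        ultimately show ?thesis unfolding E_def by simp
      qed
      have cc: "conn ?F i j" using cF unfolding c_def by (rule conn_edge)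
      have a: "acyclic_edges ?F"
      proof -
        obtain b' where b': "i \<le> b'" "b' < j" "ed b' \<in> Q" using 2 by auto
        show ?thesis
        proof (rule acyclic_mono[OF T2[OF p b'(1,2)]])
          show "?F \<subseteq> E - {pe p, ed b'}" using b'(3) by auto
        qed
      qed
      have s: "\<not> conn ?F 1 t"
      proof -
        obtain a' where a': "1 \<le> a'" "a' < t" "ed a' \<in> Q" "\<not> (i \<le> a' \<and> a' < j)"
        proof (cases "a < i")
          case True then show ?thesis using 2 by (intro that[of a]) auto
        next
          case False then show ?thesis using 2 by (intro that[of b]) auto
        qed
        show ?thesis
          by (rule sep[OF sub p peF, of a']) (use a' in auto)
      qed
      have sp: "\<forall>v\<in>{1..n}. conn ?F 1 v \<or> conn ?F t v"
      proof
        fix v assume v: "v \<in> {1..n}"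
        show "conn ?F 1 v \<or> conn ?F t v"
        proof (cases "t \<le> v")
          case True then show ?thesis using p2_span[OF p QA True] v by simp
        next
          case vt: False
          show ?thesis
          proof (cases "v \<le> a")
            case True
            have "conn ?F 1 v"
              by (rule conn_interval[of 1 a]) (use True v 2 edq in auto)
            then show ?thesis by simp
          next
            case va: False
            show ?thesis
            proof (cases "b < v")
              case True
              have "conn ?F t v"
                by (rule conn_interval[of "Suc b" t]) (use True vt v 2 edq in auto)
              then show ?thesis by simp
            next
              case vb: False
              have mid: "conn ?F v x" if "a < x" "x \<le> b" for x
                by (rule conn_interval[of "Suc a" b]) (use that va vb 2 edq in auto)
              show ?thesis
              proof (cases "a < i")
                case True
                then have ib: "i \<le> b" "b < j" using 2 by auto
                have "conn ?F v i" using mid[of i] True ib by simp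
                moreover have "conn ?F j t"
                  by (rule conn_interval[of "Suc b" t]) (use ib jt 2 edq in auto)
                ultimately have "conn ?F v t" using cc conn_trans by blast
                then show ?thesis using conn_sym by blast
              next
                case False
                then have ia: "i \<le> a" "a < j" "j \<le> b" using 2 by auto
                have "conn ?F v j" using mid[of j] ia by simp
                moreover have "conn ?F i 1"
                  by (rule conn_interval[of 1 a]) (use ia i1 2 edq in auto)
                ultimately have "conn ?F v 1" using conn_sym[OF cc] conn_trans by blast
                then show ?thesis using conn_sym by blast
              qed
            qed
          qed
        qed
      qed
      show ?thesis using a s sp by blast
    qed
  show ?thesis unfolding two_tree_forest_def using sub all by blast
qed


lemma three_distinct:
  assumes "3 \<le> card A"
  shows "\<exists>x y z. x \<in> A \<and> y \<in> A \<and> z \<in> A \<and> x \<noteq> y \<and> x \<noteq> z \<and> y \<noteq> z"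
proof -
  obtain T where T: "T \<subseteq> A" "card T = 3" using obtain_subset_with_card_n[OF assms] by metis
  then obtain x T1 where "T = insert x T1" "x \<notin> T1" "card T1 = 2"
    by (metis card_Suc_eq numeral_3_eq_3 numeral_2_eq_2)
  moreover then obtain y z where "T1 = {y, z}" "y \<noteq> z" by (auto simp: card_2_iff)
  ultimately show ?thesis using T(1) by auto
qed

lemma c_notAD: "c \<notin> AD" unfolding AD_def using c_not_ed by auto
lemma c_notBs: "c \<notin> Bs" unfolding Bs_def using c_not_ed by auto
lemma Bs_AD: "x \<in> Bs \<Longrightarrow> x \<notin> AD"
  unfolding Bs_def AD_def by (auto simp: ed_inj)

lemma fwd:
  assumes "two_tree_forest n E 1 t F"
  shows "F \<in> Good"
proof -
  have sub: "F \<subseteq> E" and acyc: "acyclic_edges F" and span: "\<forall>v\<in>{1..n}. conn F 1 v \<or> conn F t v"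
    and nc: "\<not> conn F 1 t"
    using assms unfolding two_tree_forest_def by auto
  have "\<exists>p. t \<le> p \<and> p \<le> n \<and> pe p \<notin> F"
  proof (rule ccontr)
    assume "\<not> ?thesis"
    then have allp: "pe q \<in> F" if "t \<le> q" "q \<le> n" for q using that by blast
    have "conn F t n"
    proof (rule conn_interval[of t n])
      show "\<forall>k. t \<le> k \<longrightarrow> k < n \<longrightarrow> ed k \<in> F"
      proof (intro allI impI)
        fix k assume "t \<le> k" "k < n"
        then show "ed k \<in> F" using allp[of k] by (simp add: pe_def)
      qed
    qed (use tn' in auto)
    moreover have "conn F n 1" using allp[of n] tn' by (intro conn_edge) (simp add: pe_def)
    ultimately have "conn F t 1" by (rule conn_trans)
    then show False using nc conn_sym by blast
  qed
  then obtain p where p: "t \<le> p" "p \<le> n" "pe p \<notin> F" by blast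
  have uniq: "q = p" if "t \<le> q" "q \<le> n" "pe q \<notin> F" for q
  proof (rule ccontr)
    assume "q \<noteq> p"
    then consider "p < q" | "q < p" by linarith
    then show False
    proof cases
      case 1 show False by (rule p2_false[OF sub span p(1) 1 that(2) p(3) that(3)])
    next
      case 2 show False by (rule p2_false[OF sub span that(1) 2 p(2) that(3) p(3)])
    qed
  qed
  define Q where "Q = E - F - {pe p}"
  have Feq: "F = E - insert (pe p) Q" unfolding Q_def using sub p(3) by blast
  have QA: "Q \<subseteq> ArcC"
  proof
    fix x assume x: "x \<in> Q"
    then have "x \<in> E" "x \<notin> F" "x \<noteq> pe p" unfolding Q_def by auto
    then have e: "x \<in> E" "x \<notin> F" "x \<noteq> pe p" by auto
    show "x \<in> ArcC"
    proof (rule ccontr)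
      assume "x \<notin> ArcC"
      then obtain q where q: "t \<le> q" "q \<le> n" "x = pe q" using E_split[OF e(1)] by auto
      then have "q = p" using uniq e(2) by blast
      then show False using q e(3) by simp
    qed
  qed
  have inF: "x \<in> F \<longleftrightarrow> x \<notin> Q" if xa: "x \<in> ArcC" for x
  proof -
    have "x \<in> E" using xa ArcC_E by (rule subsetD[rotated])
    moreover have "x \<noteq> pe p" using xa pe_notArc[OF p(1,2)] by metis
    ultimately show ?thesis unfolding Q_def by simp
  qed
  have edF: "ed k \<in> F \<longleftrightarrow> ed k \<notin> Q" if "1 \<le> k" "k < t" for k
    using inF[of "ed k"] that unfolding ArcC_def by simp
  have cF: "c \<in> F \<longleftrightarrow> c \<notin> Q" using inF unfolding ArcC_def by simp
  have finQ: "finite Q" using finite_subset[OF QA finite_subset[OF ArcC_E finite_E]] .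
  have f1: "\<exists>x\<in>Q. x = c \<or> x \<in> Bs"
  proof (rule ccontr)
    assume "\<not> ?thesis"
    then have c: "c \<in> F" and b: "\<forall>k. i \<le> k \<longrightarrow> k < j \<longrightarrow> ed k \<in> F"
      using cF edF i1 jt unfolding Bs_def by auto
    have "conn (F - {c}) i j"
      by (rule conn_interval[of i j]) (use b c_not_ed ij in auto)
    moreover have "\<not> conn (F - {c}) i j"
      using acyc c unfolding acyclic_edges_def c_def by blast
    ultimately show False by simp
  qed
  have f2: "c \<in> Q \<or> (\<exists>x\<in>Q. x \<in> AD)"
  proof (rule ccontr)
    assume "\<not> ?thesis"
    then have c: "c \<in> F" and b: "\<forall>k. 1 \<le> k \<longrightarrow> k < t \<longrightarrow> \<not> (i \<le> k \<and> k < j) \<longrightarrow> ed k \<in> F"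
      using cF edF unfolding AD_def by auto
    have "conn F 1 i"
      by (rule conn_interval[of 1 i]) (use b i1 ij jt in auto)
    moreover have "conn F i j" using c unfolding c_def by (rule conn_edge)
    moreover have "conn F j t"
      by (rule conn_interval[of j t]) (use b i1 ij jt in auto)
    ultimately show False using nc conn_trans by blast
  qed
  have f3: "Q \<noteq> {c}"
  proof
    assume "Q = {c}"
    then have b: "\<forall>k. 1 \<le> k \<longrightarrow> k < t \<longrightarrow> ed k \<in> F"
      using edF c_not_ed by auto
    have "conn F 1 t"
      by (rule conn_interval[of 1 t]) (use b t2 in auto)
    then show False using nc by simp
  qed
  define K where "K = {k. 1 \<le> k \<and> k < t \<and> ed k \<notin> F}"
  have clas: "\<exists>k\<in>K. x = ed k" if xq: "x \<in> Q" "x \<noteq> c" for x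
  proof -
    have "x \<in> insert c (ed ` {1..<t})" using xq QA unfolding ArcC_def by auto
    then have "x \<in> ed ` {1..<t}" using xq(2) by blast
    then obtain k where k0: "k \<in> {1..<t}" "x = ed k" by (rule imageE) simp
    then have k: "1 \<le> k" "k < t" "x = ed k" by auto
    then have "ed k \<notin> F" using edF xq by auto
    then show ?thesis using k unfolding K_def by auto
  qed
  have H2: False if "c \<in> Q" "a \<in> K" "b \<in> K" "a < b" for a b
  proof (rule seg_false[OF sub span, of a b])
    show "1 \<le> a" "b < t" "ed a \<notin> F" "ed b \<notin> F" using that unfolding K_def by auto
    show "a < b" by fact
    show "c \<in> F \<longrightarrow> (i \<in> {a<..b}) = (j \<in> {a<..b})" using cF that by simp
  qed
  have H3: False if "a \<in> K" "b \<in> K" "d \<in> K" "a < b" "b < d" for a b d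
  proof -
    have k: "1 \<le> a" "d < t" "ed a \<notin> F" "ed b \<notin> F" "ed d \<notin> F" using that unfolding K_def by auto
    show False
    proof (cases "c \<in> F \<longrightarrow> (i \<in> {a<..b} \<longleftrightarrow> j \<in> {a<..b})")
      case True
      show False by (rule seg_false[OF sub span, of a b]) (use k that True in auto)
    next
      case F1: False
      show False
      proof (cases "i \<in> {b<..d} \<longleftrightarrow> j \<in> {b<..d}")
        case True
        show False by (rule seg_false[OF sub span, of b d]) (use k that True in auto)
      next
        case False
        show False by (rule seg_false[OF sub span, of a d]) (use k that False F1 in auto)
      qed
    qed
  qed
  have f4: "card Q \<le> 2"
  proof (rule ccontr)
    assume "\<not> card Q \<le> 2"
    then obtain x y z where xyz: "x \<in> Q" "y \<in> Q" "z \<in> Q" "x \<noteq> y" "x \<noteq> z" "y \<noteq> z"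
      using three_distinct[of Q] by auto
    have two: False if tw: "c \<in> Q" "u \<in> Q" "w \<in> Q" "u \<noteq> c" "w \<noteq> c" "u \<noteq> w" for u w
    proof -
      obtain a where a: "a \<in> K" "u = ed a" using clas[OF tw(2,4)] by blast
      obtain b where b: "b \<in> K" "w = ed b" using clas[OF tw(3,5)] by blast
      have "a \<noteq> b" using a b tw by auto
      then consider "a < b" | "b < a" by linarith
      then show False using H2 tw a b by metis
    qed
    show False
    proof (cases "x = c \<or> y = c \<or> z = c")
      case True
      then show False using two xyz by metis
    next
      case False
      obtain a where a: "a \<in> K" "x = ed a" using clas[of x] xyz False by blast
      obtain b where b: "b \<in> K" "y = ed b" using clas[of y] xyz False by blast
      obtain d where d: "d \<in> K" "z = ed d" using clas[of z] xyz False by blast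
      have "a \<noteq> b" "a \<noteq> d" "b \<noteq> d" using a b d xyz by auto
      then show False using H3 a(1) b(1) d(1) by (metis linorder_neqE_nat)
    qed
  qed
  have f5: "card Q \<ge> 2"
  proof (rule ccontr)
    assume "\<not> card Q \<ge> 2"
    then have "card Q = 0 \<or> card Q = 1" by linarith
    then have "Q = {} \<or> (\<exists>x. Q = {x})" using finQ by (auto simp: card_1_singleton_iff)
    then show False
    proof
      assume "Q = {}" then show False using f1 by simp
    next
      assume "\<exists>x. Q = {x}"
      then obtain x where x: "Q = {x}" by blast
      then have "x = c \<or> x \<in> Bs" using f1 by simp
      then show False
      proof
        assume "x = c" then show False using f3 x by simp
      next
        assume xb: "x \<in> Bs"
        then show False using f2 x c_notBs Bs_AD by auto
      qed
    qed
  qed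
  have QV: "Q \<in> V2"
    unfolding V2_def
  proof (intro CollectI conjI)
    show "Q \<subseteq> ArcC" by fact
    show "card Q = 2" using f4 f5 by simp
    show "\<not> Q \<subseteq> AD" using f1 c_notAD Bs_AD by blast
    show "\<not> Q \<subseteq> Bs" using f2 c_notBs Bs_AD by blast
  qed
  show ?thesis unfolding Good_def
    by (rule image_eqI[of _ _ "(p, Q)"]) (use Feq p QV in auto)
qed


lemma set_eq: "{F. two_tree_forest n E 1 t F} = Good"
proof
  show "{F. two_tree_forest n E 1 t F} \<subseteq> Good" using fwd by blast
  show "Good \<subseteq> {F. two_tree_forest n E 1 t F}"
  proof
    fix F assume "F \<in> Good"
    then obtain p Q where "p \<in> {t..n}" "Q \<in> V2" "F = E - insert (pe p) Q"
      unfolding Good_def by auto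
    then show "F \<in> {F. two_tree_forest n E 1 t F}" using bwd by auto
  qed
qed

lemma V2_sub: "Q \<in> V2 \<Longrightarrow> Q \<subseteq> ArcC" unfolding V2_def by simp

lemma inj_Good: "inj_on (\<lambda>(p, Q). E - insert (pe p) Q) ({t..n} \<times> V2)"
proof (rule inj_onI, clarify)
  fix p Q p' Q'
  assume p: "p \<in> {t..n}" "Q \<in> V2" "p' \<in> {t..n}" "Q' \<in> V2"
    and eq: "E - insert (pe p) Q = E - insert (pe p') Q'"
  have s1: "insert (pe p) Q \<subseteq> E" using pe_E p V2_sub ArcC_E by auto
  have s2: "insert (pe p') Q' \<subseteq> E" using pe_E p V2_sub ArcC_E by auto
  have ins: "insert (pe p) Q = insert (pe p') Q'"
  proof -
    have "insert (pe p) Q = E - (E - insert (pe p) Q)" using s1 by blast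
    also have "\<dots> = E - (E - insert (pe p') Q')" using eq by simp
    also have "\<dots> = insert (pe p') Q'" using s2 by blast
    finally show ?thesis .
  qed
  have n1: "pe p \<notin> Q'" "pe p' \<notin> Q" "pe p \<notin> Q" "pe p' \<notin> Q'"
    using pe_notArc p V2_sub by (meson atLeastAtMost_iff subsetD)+
  have "pe p = pe p'" using ins n1 by blast
  then have pp: "p = p'" using pe_inj p by auto
  have "Q = Q'"
  proof -
    have "Q = insert (pe p) Q - {pe p}" using n1 by simp
    also have "\<dots> = insert (pe p') Q' - {pe p'}" using ins pp by simp
    also have "\<dots> = Q'" using n1 by simp
    finally show ?thesis .
  qed
  then show "p = p' \<and> Q = Q'" using pp by simp
qed

definition "S2 X = {Q. Q \<subseteq> X \<and> card Q = 2}"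

lemma card_ArcC: "card ArcC = t"
proof -
  have "card (ed ` {1..<t}) = t - 1" using card_image[OF inj_on_subset[OF inj_ed]] by simp
  moreover have "c \<notin> ed ` {1..<t}" using c_not_ed by auto
  ultimately show ?thesis unfolding ArcC_def using t2 by simp
qed

lemma card_AD: "card AD = (i - 1) + (t - j)"
proof -
  have "card AD = card ({1..<i} \<union> {j..<t})"
    unfolding AD_def using card_image[OF inj_on_subset[OF inj_ed]] by simp
  also have "\<dots> = card {1..<i} + card {j..<t}"
    by (rule card_Un_disjoint) (use ij in auto)
  finally show ?thesis by simp
qed

lemma card_Bs: "card Bs = j - i"
  unfolding Bs_def using card_image[OF inj_on_subset[OF inj_ed]] by simp

lemma V2_eq: "V2 = S2 ArcC - (S2 AD \<union> S2 Bs)"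
  unfolding V2_def S2_def by auto

lemma card_V2: "card V2 = (t choose 2) - (((i - 1) + (t - j)) choose 2) - ((j - i) choose 2)"
proof -
  have fA: "finite ArcC" unfolding ArcC_def by simp
  have AD_A: "AD \<subseteq> ArcC" unfolding AD_def ArcC_def using ij jt by auto
  have Bs_A: "Bs \<subseteq> ArcC" unfolding Bs_def ArcC_def using i1 jt by auto
  have fS: "finite (S2 ArcC)" unfolding S2_def using fA by auto
  have sub: "S2 AD \<union> S2 Bs \<subseteq> S2 ArcC" unfolding S2_def using AD_A Bs_A by auto
  have disj: "S2 AD \<inter> S2 Bs = {}"
  proof (rule ccontr)
    assume "S2 AD \<inter> S2 Bs \<noteq> {}"
    then obtain Q where "Q \<subseteq> AD" "Q \<subseteq> Bs" "card Q = 2" unfolding S2_def by auto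
    then have "Q = {}" using Bs_AD by blast
    then show False using \<open>card Q = 2\<close> by simp
  qed
  have fAD: "finite (S2 AD)" "finite (S2 Bs)" using sub fS finite_subset by blast+
  have "card V2 = card (S2 ArcC) - card (S2 AD \<union> S2 Bs)"
    unfolding V2_eq by (rule card_Diff_subset) (use fAD sub in auto)
  also have "card (S2 AD \<union> S2 Bs) = card (S2 AD) + card (S2 Bs)"
    by (rule card_Un_disjoint) (use fAD disj in auto)
  also have "card (S2 ArcC) = t choose 2" unfolding S2_def using n_subsets[OF fA] card_ArcC by simp
  also have "card (S2 AD) = ((i - 1) + (t - j)) choose 2"
    unfolding S2_def using n_subsets[of AD] card_AD fA AD_A finite_subset by metis
  also have "card (S2 Bs) = (j - i) choose 2"
    unfolding S2_def using n_subsets[of Bs] card_Bs fA Bs_A finite_subset by metis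
  finally show ?thesis by simp
qed

end

lemma two_choose2: "2 * int (x choose 2) = int x * (int x - 1)"
proof -
  have "even (x * (x - 1))" by auto
  then have "2 * (x choose 2) = x * (x - 1)" by (simp add: choose_two)
  then have "int (2 * (x choose 2)) = int (x * (x - 1))" by simp
  then show ?thesis by (cases x) (auto simp: algebra_simps)
qed

lemma choose2_sum: "int ((m + s + 1) choose 2) = int (s choose 2) + int (m choose 2) + int s * (int m + 1) + int m"
proof -
  have "2 * int ((m + s + 1) choose 2) = 2 * (int (s choose 2) + int (m choose 2) + int s * (int m + 1) + int m)"
    unfolding distrib_left two_choose2 by (simp add: algebra_simps)
  then show ?thesis by simp
qed


theorem proposition7p6:
  fixes n t i j :: nat
  assumes "n \<ge> 3" and "2 \<le> t" and "t \<le> (n + 1) div 2"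
    and "1 \<le> i" and "i < j" and "j \<le> t" and "j \<noteq> i + 1"
  shows "int (F2 n (cycle_chord_edges n i j) 1 t) =
    (if i = 1 \<and> j = t then (int t - 1) * (int n - int t + 1)
     else (int n - int t + 1) * ((int t - int j + int i) * (int j - int i + 1) - 1))"
proof -
  interpret cc n t i j using assms by unfold_locales auto
  define s where "s = (i - 1) + (t - j)"
  define m where "m = j - i"
  have tms: "t = m + s + 1" unfolding s_def m_def using assms by simp
  have "F2 n (cycle_chord_edges n i j) 1 t = card Good"
    unfolding F2_def E_eq set_eq ..
  also have "\<dots> = card ({t..n} \<times> V2)"
    unfolding Good_def by (rule card_image[OF inj_Good])
  also have "\<dots> = (n + 1 - t) * card V2"
    by (simp add: card_cartesian_product)
  finally have F: "F2 n (cycle_chord_edges n i j) 1 t = (n + 1 - t) * card V2" .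
  have cV: "card V2 = (t choose 2) - (s choose 2) - (m choose 2)"
    using card_V2 unfolding s_def m_def .
  have cs: "int (t choose 2) = int (s choose 2) + int (m choose 2) + int s * (int m + 1) + int m"
    unfolding tms by (rule choose2_sum)
  have ge: "(s choose 2) + (m choose 2) \<le> (t choose 2)"
  proof -
    have "int ((s choose 2) + (m choose 2)) \<le> int (t choose 2)" using cs by simp
    then show ?thesis by linarith
  qed
  have cV': "int (card V2) = int s * (int m + 1) + int m"
    using cV cs ge by simp
  have tn'': "t \<le> n" using tn' by simp
  have Fi: "int (F2 n (cycle_chord_edges n i j) 1 t) = (int n - int t + 1) * (int s * (int m + 1) + int m)"
    unfolding F of_nat_mult cV' using tn'' by simp
  have si: "int s = int i - 1 + int t - int j" unfolding s_def using assms by simp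
  have mi: "int m = int j - int i" unfolding m_def using assms by simp
  show ?thesis
  proof (cases "i = 1 \<and> j = t")
    case True
    then have s0: "s = 0" and m0: "int m = int t - 1" using si mi by auto
    have "int (F2 n (cycle_chord_edges n i j) 1 t) = (int n - int t + 1) * (int t - 1)"
      unfolding Fi s0 m0 by simp
    then show ?thesis using True by (simp add: mult.commute)
  next
    case False
    then show ?thesis unfolding Fi si mi by (simp add: algebra_simps)
  qed
qed

end
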